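(* Let $\alpha>1$, $\mathcal{D}_\alpha\in\{\mathcal{F}_\alpha,\mathcal{P}_\alpha\}$, $\mathcal{B}\subseteq[d]$, $i\in\mathcal{B}$, $\lambda\in[0,\infty)^d$, an integer $\tilde m>1$ and $j\in\mathcal{B}\setminus\{i\}$. Let $\lambda'\in[0,\infty)^d$ satisfy $\lambda'_j\ge\lambda_j$ and $\lambda'_k=\lambda_k$ for all $k\ne j$. Then $$\frac{J_i(\lambda;\mathcal{D}_\alpha,\tilde m,\mathcal{B})}{\phi_i(\lambda;\mathcal{D}_\alpha,\tilde m,\mathcal{B})}\le\frac{J_i(\lambda';\mathcal{D}_\alpha,\tilde m-1,\mathcal{B}\setminus\{j\})}{\phi_i(\lambda';\mathcal{D}_\alpha,\tilde m-1,\mathcal{B}\setminus\{j\})}\vee\frac{J_i(\lambda';\mathcal{D}_\alpha,\tilde m,\mathcal{B})}{\phi_i(\lambda';\mathcal{D}_\alpha,\tilde m,\mathcal{B})}.$$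
   Context: $u\vee v=\max(u,v)$. Fréchet $\mathcal{F}_\alpha$: CDF $F(x)=e^{-1/x^\alpha}$, density $f(x)=\alpha x^{-(\alpha+1)}e^{-1/x^\alpha}$, $x\ge0$, left endpoint $\nu=0$; Pareto $\mathcal{P}_\alpha$: $F(x)=1-x^{-\alpha}$, $f(x)=\alpha x^{-(\alpha+1)}$, $x\ge1$, $\nu=1$. For $\mathcal{B}\subseteq[d]$, $i\in\mathcal{B}$, $u\in\mathbb{R}^d$, $\mathrm{rank}(i,u;\mathcal{B})$ is the rank of $u_i$ among $\{u_k:k\in\mathcal{B}\}$ in descending order. For $\mathcal{D}\in\{\mathcal{F}_\alpha,\mathcal{P}_\alpha\}$ with CDF $F$, density $f$, left endpoint $\nu$, $\lambda\in[0,\infty)^d$, integer $\theta\ge1$: $$\phi_{i,\theta}(\lambda;\mathcal{D},\mathcal{B})=\int_{\nu-\lambda_i}^\infty\sum_{S\subseteq\mathcal{B}\setminus\{i\},|S|=\theta-1}\prod_{k\in S}(1-F(z+\lambda_k))\prod_{k\in\mathcal{B}\setminus(S\cup\{i\})}F(z+\lambda_k)\,f(z+\lambda_i)\,dz$$ (equal to $\mathbb{P}[\mathrm{rank}(i,r-\lambda;\mathcal{B})=\theta]$ for $r$ with i.i.d. coordinates from $\mathcal{D}$; empty sum $=0$), and $J_{i,\theta}(\lambda;\mathcal{D},\mathcal{B})$ is the same integral with the extra factor $\frac1{z+\lambda_i}$ in the integrand. $\phi_i(\lambda;\mathcal{D},\tilde m,\mathcal{B})=\sum_{\theta=1}^{\tilde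 m}\phi_{i,\theta}(\lambda;\mathcal{D},\mathcal{B})$ and $J_i(\lambda;\mathcal{D},\tilde m,\mathcal{B})=\sum_{\theta=1}^{\tilde m}J_{i,\theta}(\lambda;\mathcal{D},\mathcal{B})$. *)

theory Defs
  imports "HOL-Analysis.Analysis"
begin

datatype distr = Frechet real | Pareto real

fun cdf :: "distr \<Rightarrow> real \<Rightarrow> real" where
  "cdf (Frechet a) x = (if x > 0 then exp (- (1 / (x powr a))) else 0)"
| "cdf (Pareto a) x = (if x \<ge> 1 then 1 - x powr (- a) else 0)"

fun pdf :: "distr \<Rightarrow> real \<Rightarrow> real" where
  "pdf (Frechet a) x = (if x > 0 then a * x powr (- (a + 1)) * exp (- (1 / (x powr a))) else 0)"
| "pdf (Pareto a) x = (if x \<ge> 1 then a * x powr (- (a + 1)) else 0)"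

fun lep :: "distr \<Rightarrow> real" where
  "lep (Frechet a) = 0"
| "lep (Pareto a) = 1"

definition rank_integrand :: "distr \<Rightarrow> nat set \<Rightarrow> (nat \<Rightarrow> real) \<Rightarrow> nat \<Rightarrow> nat \<Rightarrow> real \<Rightarrow> real" where
  "rank_integrand D B lam i \<theta> z =
     (\<Sum>S\<in>{S. S \<subseteq> B - {i} \<and> card S = \<theta> - 1}.
        (\<Prod>k\<in>S. 1 - cdf D (z + lam k)) * (\<Prod>k\<in>B - (S \<union> {i}). cdf D (z + lam k)))
     * pdf D (z + lam i)"

definition phi_theta :: "nat \<Rightarrow> nat \<Rightarrow> (nat \<Rightarrow> real) \<Rightarrow> distr \<Rightarrow> nat set \<Rightarrow> real" where
  "phi_theta i \<theta> lam D B = (LINT z:{lep D - lam i..}|lborel. rank_integrand D B lam i \<theta> z)"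

definition J_theta :: "nat \<Rightarrow> nat \<Rightarrow> (nat \<Rightarrow> real) \<Rightarrow> distr \<Rightarrow> nat set \<Rightarrow> real" where
  "J_theta i \<theta> lam D B = (LINT z:{lep D - lam i..}|lborel. rank_integrand D B lam i \<theta> z / (z + lam i))"

definition phi :: "nat \<Rightarrow> (nat \<Rightarrow> real) \<Rightarrow> distr \<Rightarrow> nat \<Rightarrow> nat set \<Rightarrow> real" where
  "phi i lam D m B = (\<Sum>\<theta>=1..m. phi_theta i \<theta> lam D B)"

definition J :: "nat \<Rightarrow> (nat \<Rightarrow> real) \<Rightarrow> distr \<Rightarrow> nat \<Rightarrow> nat set \<Rightarrow> real" where
  "J i lam D m B = (\<Sum>\<theta>=1..m. J_theta i \<theta> lam D B)"

end

theory Submission imports Defs "HOL-Real_Asymp.Real_Asymp" begin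
lemma cdf_meas[measurable]: "(\<lambda>x. cdf D x) \<in> borel_measurable borel"
  by (cases D) (simp_all, measurable)
lemma pdf_meas[measurable]: "(\<lambda>x. pdf D x) \<in> borel_measurable borel"
  by (cases D) (simp_all, measurable)


lemma powr_neg3: "0 < (x::real) \<Longrightarrow> x powr (-(3*a)) = (1/(x powr a))^3"
proof -
  assume x: "0 < x"
  have "(1/(x powr a))^3 = (x powr (-a))^3" by (simp add: powr_minus_divide)
  also have "\<dots> = (x powr (-a)) powr (real 3)" using x by (simp add: powr_realpow)
  also have "\<dots> = x powr (-(3*a))" by (simp add: powr_powr mult.commute)
  finally show ?thesis by simp
qed

lemma fr_small:
  fixes x a :: real
  assumes "0 < x" "x \<le> 1" "1 \<le> a" "b \<le> a + 2" "0 \<le> b"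
  shows "x powr -b * exp(-(1/(x powr a))) \<le> 27"
proof -
  define u where "u = 1/(x powr a)"
  have u: "u > 0" using assms by (simp add: u_def)
  have "x powr -b \<le> x powr (-(3*a))"
    using assms by (intro powr_mono') auto
  also have "x powr (-(3*a)) = u^3"
    using powr_neg3 assms u_def by simp
  finally have 1: "x powr -b \<le> u^3" .
  have "(u/3)^3 \<le> (1 + u/3)^3" using u by (intro power_mono) auto
  also have "\<dots> \<le> exp(u/3)^3" using u by (intro power_mono) auto
  also have "\<dots> = exp u" by (simp flip: exp_of_nat_mult)
  finally have 2: "u^3 \<le> 27 * exp u" by (simp add: power_divide)
  have "x powr -b * exp(-u) \<le> u^3 * exp (-u)" using 1 by (intro mult_right_mono) auto
  also have "\<dots> \<le> 27 * exp u * exp(-u)" using 2 by (intro mult_right_mono) auto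
  also have "\<dots> = 27" by (simp add: exp_minus)
  finally show ?thesis by (simp add: u_def)
qed

lemma big_bound:
  fixes x a b :: real
  assumes "1 \<le> x" "2 \<le> b"
  shows "x powr -b \<le> 1 / x^2"
proof -
  have "x powr -b \<le> x powr -2" using assms by (intro powr_mono) auto
  also have "\<dots> = 1 / x^2" using assms by (simp add: powr_minus_divide powr_realpow)
  finally show ?thesis .
qed

lemma powr_shift1: "0 < (x::real) \<Longrightarrow> x powr -(a+1) = x * x powr -(a+2)"
proof -
  assume x: "0 < x"
  have "x * x powr -(a+2) = x powr 1 * x powr -(a+2)" using x by simp
  also have "\<dots> = x powr (1 + -(a+2))" by (rule powr_add[symmetric])
  also have "\<dots> = x powr -(a+1)" by (simp add: algebra_simps)
  finally show ?thesis by simp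
qed

definition Mj :: "real \<Rightarrow> real \<Rightarrow> real" where
  "Mj C x = C * indicator {0..1} x + C * (indicator {1..} x / x^2)"

lemma int_tail: "integrable lborel (\<lambda>x::real. indicator {1..} x / x^2)"
proof (rule integrableI_nn_integral_finite)
  show "(\<lambda>x::real. indicator {1..} x / x^2) \<in> borel_measurable lborel" by measurable
  show "AE x in lborel. 0 \<le> (indicator {1..} x / x^2 :: real)" by auto
  have d: "DERIV (\<lambda>x. -1/x) x :> 1/x^2" if "1 \<le> x" for x :: real
      using that by (auto intro!: derivative_eq_intros simp: power2_eq_square)
  have l: "((\<lambda>x::real. -1/x) \<longlongrightarrow> 0) at_top" by real_asymp
  have "(\<integral>\<^sup>+x. ennreal (1/x^2) * indicator {1..} x \<partial>lborel) = ennreal (0 - (-1/1))"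
    using nn_integral_FTC_atLeast[of "\<lambda>x::real. 1/x^2" 1 "\<lambda>x. -1/x" 0, OF _ d _ l] by simp
  moreover have "(\<integral>\<^sup>+x. ennreal (indicator {1..} x / x^2) \<partial>lborel) = (\<integral>\<^sup>+x. ennreal (1/x^2) * indicator {1..} x \<partial>lborel)"
    by (intro nn_integral_cong) (auto split: split_indicator)
  ultimately show "(\<integral>\<^sup>+x. ennreal (indicator {1..} x / x^2) \<partial>lborel) = ennreal 1" by simp
qed

lemma int_Mj: "integrable lborel (Mj C)"
proof -
  have "integrable lborel (\<lambda>x::real. (\<lambda>_. C) x * indicator {0..1} x)"
    by (rule borel_integrable_atLeastAtMost) auto
  moreover have "integrable lborel (\<lambda>x::real. C * (indicator {1..} x / x^2))"
    using integrable_mult_right[OF int_tail, of C] .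
  ultimately have "integrable lborel (\<lambda>x. C * indicator {0..1} x + C * (indicator {1..} x / x^2))"
    by (simp add: mult.commute)
  then show ?thesis unfolding Mj_def[abs_def] by simp
qed

lemma pdf_nonneg: "0 < a \<Longrightarrow> D \<in> {Frechet a, Pareto a} \<Longrightarrow> 0 \<le> pdf D x"
  by auto

lemma pdf_bounds:
  assumes "1 < a" "D \<in> {Frechet a, Pareto a}"
  shows "pdf D x \<le> Mj (27*a) x" "pdf D x / x \<le> Mj (27*a) x"
proof -
  have "pdf D x \<le> Mj (27*a) x \<and> pdf D x / x \<le> Mj (27*a) x"
  proof (cases "x \<le> 0")
    case True
    then show ?thesis using assms by (auto simp: Mj_def)
  next
    case False
    show ?thesis
    proof (cases "x \<le> 1")
      case True
      have M: "Mj (27*a) x \<ge> 27 * a" using True False assms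
        by (auto simp: Mj_def split: split_indicator)
      {
        assume D: "D = Frechet a"
        have "x powr -(a+1) * exp(-(1/(x powr a))) \<le> 27"
          using False True assms by (intro fr_small) auto
        then have e1: "pdf D x \<le> 27 * a" using D False assms by auto
        have "x powr -(a+2) * exp(-(1/(x powr a))) \<le> 27"
          using False True assms by (intro fr_small) auto
        have "x * x powr -(a+2) = x powr 1 * x powr -(a+2)" using False by simp
        also have "\<dots> = x powr (1 + -(a+2))" by (rule powr_add[symmetric])
        also have "\<dots> = x powr -(a+1)" by (simp add: algebra_simps)
        finally have "x * x powr -(a+2) = x powr -(a+1)" .
        then have xx: "x powr -(a+1) = x * x powr -(a+2)" by simp
        have "pdf D x / x = a * (x * x powr -(a+2)) * exp(-(1/(x powr a))) / x"
          using D False by (simp only: xx pdf.simps if_True not_le) 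
        also have "\<dots> = a * (x powr -(a+2) * exp(-(1/(x powr a))))" using False by simp
        finally have "pdf D x / x = a * (x powr -(a+2) * exp(-(1/(x powr a))))" .
        moreover note \<open>x powr -(a+2) * exp(-(1/(x powr a))) \<le> 27\<close>
        ultimately have "pdf D x / x \<le> 27 * a" using assms by simp
        with e1 have ?thesis using M by linarith
      }
      moreover {
        assume D: "D = Pareto a"
        have "pdf D x \<le> a" "pdf D x / x \<le> a" using D True False assms by auto
        then have ?thesis using M assms by linarith
      }
      ultimately show ?thesis using assms by auto
    next
      case False2: False
      have M: "Mj (27*a) x \<ge> 27 * a / x^2" using False2 assms
        by (auto simp: Mj_def split: split_indicator)
      have b1: "x powr -(a+1) \<le> 1/x^2" "x powr -(a+2) \<le> 1/x^2"
        using False2 assms big_bound[of x "a+1"] big_bound[of x "a+2"] by auto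
      have eq: "x powr -(a+1) / x = x powr -(a+2)" using False2 powr_shift1[of x a]
        by simp
      have E: "exp(-(1/(x powr a))) \<le> 1" using False2 by auto
      have p1: "pdf D x \<le> a * x powr -(a+1)"
        using assms False2 E mult_left_le[of "exp(-(1/(x powr a)))" "a * x powr -(a+1)"] by auto
      have "pdf D x / x \<le> a * x powr -(a+1) / x"
        using p1 False2 by (intro divide_right_mono) auto
      also have "\<dots> = a * (x powr -(a+1) / x)" by simp
      also have "\<dots> = a * x powr -(a+2)" using eq by simp
      finally have "pdf D x \<le> a * x powr -(a+1) \<and> pdf D x / x \<le> a * x powr -(a+2)"
        using p1 by simp
      then have pp: "pdf D x \<le> a * x powr -(a+1)" "pdf D x / x \<le> a * x powr -(a+2)" by auto
      have q1: "a * x powr -(a+1) \<le> a * (1/x^2)" "a * x powr -(a+2) \<le> a * (1/x^2)"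
        using mult_left_mono[OF b1(1), of a] mult_left_mono[OF b1(2), of a] assms by auto
      have q2: "a * (1/x^2) \<le> 27 * a / x^2" using assms by (simp add: divide_right_mono)
      show ?thesis using pp q1 q2 M by linarith
    qed
  qed
  then show "pdf D x \<le> Mj (27*a) x" "pdf D x / x \<le> Mj (27*a) x" by auto
qed



lemma conv_quad:
  fixes G :: "real \<Rightarrow> real"
  assumes cv: "convex_on A G" and A: "convex A" and xy: "x \<le> y" and ab: "a \<le> b"
    and in1: "x + a \<in> A" and in4: "y + b \<in> A"
  shows "G (y+a) + G (x+b) \<le> G (x+a) + G (y+b)"
proof (cases "x + a = y + b")
  case True
  then have "x = y" "a = b" using xy ab by auto
  then show ?thesis by simp
next
  case False
  define u1 where "u1 = x + a"
  define u4 where "u4 = y + b"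
  have lt: "u1 < u4" using False xy ab by (auto simp: u1_def u4_def)
  have key: "G v \<le> (1 - (v-u1)/(u4-u1)) * G u1 + ((v-u1)/(u4-u1)) * G u4"
    if "u1 \<le> v" "v \<le> u4" for v
  proof -
    define mu where "mu = (v-u1)/(u4-u1)"
    have m: "0 \<le> mu" "mu \<le> 1" using that lt by (auto simp: mu_def)
    have e: "mu * (u4 - u1) = v - u1" using lt by (simp add: mu_def)
    have "v = (1 - mu) * u1 + mu * u4" using e by (simp add: algebra_simps)
    then have "G v = G ((1 - mu) * u1 + mu * u4)" by simp
    also have "\<dots> \<le> (1 - mu) * G u1 + mu * G u4"
      using convex_onD[OF cv m] in1 in4 by (simp add: u1_def u4_def)
    finally show ?thesis by (simp add: mu_def)
  qed
  have k1: "G (y+a) \<le> (1 - (y+a-u1)/(u4-u1)) * G u1 + ((y+a-u1)/(u4-u1)) * G u4"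
    using xy ab by (intro key) (auto simp: u1_def u4_def)
  have k2: "G (x+b) \<le> (1 - (x+b-u1)/(u4-u1)) * G u1 + ((x+b-u1)/(u4-u1)) * G u4"
    using xy ab by (intro key) (auto simp: u1_def u4_def)
  have s: "(y+a-u1)/(u4-u1) + (x+b-u1)/(u4-u1) = 1"
  proof -
    have "(y+a-u1) + (x+b-u1) = u4 - u1" by (simp add: u1_def u4_def)
    then have "(y+a-u1)/(u4-u1) + (x+b-u1)/(u4-u1) = (u4-u1)/(u4-u1)"
      by (simp add: add_divide_distrib[symmetric])
    then show ?thesis using lt by simp
  qed
  have "G (y+a) + G (x+b) \<le> (2 - ((y+a-u1)/(u4-u1) + (x+b-u1)/(u4-u1))) * G u1
        + ((y+a-u1)/(u4-u1) + (x+b-u1)/(u4-u1)) * G u4"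
    using k1 k2 by (simp add: algebra_simps)
  then show ?thesis using s by (simp add: u1_def u4_def)
qed

lemma fr_convex:
  assumes "0 < (a::real)"
  shows "convex_on {0<..} (\<lambda>u::real. u powr -a)"
proof (rule convex_on_realI[where f' = "\<lambda>u. -a * u powr (-a - 1)"])
  show "connected {0::real<..}" by simp
  show "((\<lambda>u. u powr -a) has_real_derivative -a * u powr (-a - 1)) (at u)" if "u \<in> {0<..}" for u :: real
    using that by (auto intro!: derivative_eq_intros)
  show "-a * u powr (-a - 1) \<le> -a * v powr (-a - 1)" if "u \<in> {0<..}" "v \<in> {0<..}" "u \<le> v" for u v :: real
  proof -
    have "v powr (-a - 1) \<le> u powr (-a - 1)" using that assms by (intro powr_mono2') auto
    then show ?thesis using assms by simp
  qed
qed

lemma pa_convex: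
  assumes "0 < (a::real)"
  shows "convex_on {1<..} (\<lambda>u::real. - ln (1 - u powr -a))"
proof (rule convex_on_realI[where f' = "\<lambda>u. - (a * u powr (-a - 1) / (1 - u powr -a))"])
  show "connected {1::real<..}" by simp
  show "((\<lambda>u. - ln (1 - u powr -a)) has_real_derivative - (a * u powr (-a - 1) / (1 - u powr -a))) (at u)"
    if "u \<in> {1<..}" for u :: real
  proof -
    have "u powr -a < 1" using that assms by (simp add: powr_less_one)
    then show ?thesis using that by (auto intro!: derivative_eq_intros simp: field_simps)
  qed
  show "- (a * u powr (-a - 1) / (1 - u powr -a)) \<le> - (a * v powr (-a - 1) / (1 - v powr -a))"
    if "u \<in> {1<..}" "v \<in> {1<..}" "u \<le> v" for u v :: real
  proof -
    have n: "v powr (-a - 1) \<le> u powr (-a - 1)" using that assms by (intro powr_mono2') auto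
    have d: "v powr (-a) \<le> u powr (-a)" using that assms by (intro powr_mono2') auto
    have du: "u powr -a < 1" using that assms by (simp add: powr_less_one)
    have "v powr (-a - 1) / (1 - v powr -a) \<le> u powr (-a - 1) / (1 - u powr -a)"
      using n d du by (intro frac_le) auto
    from mult_left_mono[OF this, of a] show ?thesis using assms by simp
  qed
qed

lemma pow_le1: "1 \<le> (x::real) \<Longrightarrow> 0 \<le> a \<Longrightarrow> x powr -a \<le> 1"
  using powr_mono[of "-a" 0 x] by simp

lemma cdf_nonneg: "0 < a \<Longrightarrow> D \<in> {Frechet a, Pareto a} \<Longrightarrow> cdf D x \<ge> 0"
  using pow_le1[of x a] by auto

lemma cdf_le1: "0 < a \<Longrightarrow> D \<in> {Frechet a, Pareto a} \<Longrightarrow> cdf D x \<le> 1"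
  by auto


lemma cdf_mono:
  assumes "0 < a" "D \<in> {Frechet a, Pareto a}" "x \<le> y"
  shows "cdf D x \<le> cdf D y"
proof -
  { assume D: "D = Frechet a"
    have ?thesis
    proof (cases "x > 0")
      case True
      have "y powr a \<ge> x powr a" using True assms by (intro powr_mono2) auto
      then have "1 / y powr a \<le> 1 / x powr a" using True assms by (intro divide_left_mono) auto
      then show ?thesis using D True assms by auto
    qed (use D in auto) }
  moreover
  { assume D: "D = Pareto a"
    have ?thesis
    proof (cases "x \<ge> 1")
      case True
      have "y powr -a \<le> x powr -a" using True assms by (intro powr_mono2') auto
      then show ?thesis using D True assms by auto
    qed (use D assms pow_le1[of y a] in auto) }
  ultimately show ?thesis using assms by auto
qed

lemma cdf_tp2:
  assumes a0: "0 < a" and D: "D \<in> {Frechet a, Pareto a}" and xy: "x \<le> y" and st: "s \<le> t"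
  shows "cdf D (x+s) * cdf D (y+t) \<le> cdf D (y+s) * cdf D (x+t)"
proof (cases "cdf D (x+s) = 0")
  case True
  then show ?thesis using cdf_nonneg[OF a0 D] by (simp add: mult_nonneg_nonneg)
next
  case False
  have o1: "x + s \<le> y + s" "x + s \<le> x + t" "x+s \<le> y+t" using xy st by auto
  { assume DF: "D = Frechet a"
    let ?G = "\<lambda>u::real. u powr -a"
    have p: "x + s > 0" using False DF by (auto split: if_splits)
    have e: "cdf D u = exp (- ?G u)" if "u > 0" for u
      using that DF by (simp add: powr_minus_divide)
    have "?G (y+s) + ?G (x+t) \<le> ?G (x+s) + ?G (y+t)"
      using p o1 by (intro conv_quad[OF fr_convex[OF a0]] xy st) auto
    then have ?thesis using p o1 by (simp add: e exp_add[symmetric])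
  }
  moreover
  { assume DP: "D = Pareto a"
    let ?G = "\<lambda>u::real. - ln (1 - u powr -a)"
    have p: "x + s > 1"
    proof (rule ccontr)
      assume "\<not> x + s > 1"
      then have "x + s < 1 \<or> x + s = 1" by auto
      then show False using False DP by auto
    qed
    have e: "cdf D u = exp (- ?G u)" if "u > 1" for u
    proof -
      have "u powr -a < 1" using that a0 by (simp add: powr_less_one)
      then show ?thesis using that DP by simp
    qed
    have "?G (y+s) + ?G (x+t) \<le> ?G (x+s) + ?G (y+t)"
      using p o1 by (intro conv_quad[OF pa_convex[OF a0]] xy st) auto
    then have ?thesis using p o1 by (simp add: e exp_add[symmetric])
  }
  ultimately show ?thesis using D by auto
qed

lemma sign_lemma:
  fixes F :: "real \<Rightarrow> real"
  assumes mono: "\<And>x y. x \<le> y \<Longrightarrow> F x \<le> F y" and nn: "\<And>x. 0 \<le> F x"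
    and tp2: "\<And>x y. x \<le> y \<Longrightarrow> F (x+a) * F (y+b) \<le> F (y+a) * F (x+b)"
    and ab: "a \<le> b" and t: "0 \<le> t"
  shows "\<exists>\<rho>. \<forall>z. z + c > 0 \<longrightarrow> (1/(z+c) - t) * (F (z+a) - \<rho> * F (z+b)) \<le> 0"
proof (cases "t = 0")
  case True
  have "(1/(z+c) - t) * (F (z+a) - 1 * F (z+b)) \<le> 0" if "z + c > 0" for z
    using that True mono[of "z+a" "z+b"] ab by (simp add: divide_nonpos_pos)
  then show ?thesis by blast
next
  case False
  then have tp: "t > 0" using t by auto
  define z0 where "z0 = 1/t - c"
  have lt: "1/(z+c) > t" if "z + c > 0" "z < z0" for z
  proof -
    have "z + c < 1/t" using that by (simp add: z0_def)
    then show ?thesis using that tp by (simp add: field_simps)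
  qed
  have ge: "1/(z+c) \<le> t" if "z + c > 0" "z \<ge> z0" for z
  proof -
    have "z + c \<ge> 1/t" using that by (simp add: z0_def)
    then show ?thesis using that tp by (simp add: field_simps)
  qed
  show ?thesis
  proof (cases "F (z0 + b) = 0")
    case True
    have "(1/(z+c) - t) * (F (z+a) - 0 * F (z+b)) \<le> 0" if "z + c > 0" for z
    proof (cases "z < z0")
      case True
      have "F (z+a) \<le> F (z0+b)" using True ab by (intro mono) auto
      then have "F (z+a) = 0" using \<open>F (z0 + b) = 0\<close> nn[of "z+a"] by auto
      then show ?thesis by simp
    next
      case False
      then show ?thesis using ge[of z] that nn[of "z+a"] by (simp add: mult_nonpos_nonneg)
    qed
    then show ?thesis by blast
  next
    case False
    then have Fp: "F (z0+b) > 0" using nn[of "z0+b"] by auto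
    define \<rho> where "\<rho> = F (z0+a) / F (z0+b)"
    have "(1/(z+c) - t) * (F (z+a) - \<rho> * F (z+b)) \<le> 0" if "z + c > 0" for z
    proof (cases "z < z0")
      case True
      have "F (z+a) * F (z0+b) \<le> F (z0+a) * F (z+b)" using tp2[of z z0] True by simp
      then have "F (z+a) \<le> \<rho> * F (z+b)" using Fp by (simp add: \<rho>_def field_simps)
      then show ?thesis using lt[OF that True] by (simp add: mult_nonneg_nonpos)
    next
      case False
      have "F (z0+a) * F (z+b) \<le> F (z+a) * F (z0+b)" using tp2[of z0 z] False by simp
      then have "F (z+a) \<ge> \<rho> * F (z+b)" using Fp by (simp add: \<rho>_def field_simps)
      then show ?thesis using ge[OF that] False by (simp add: mult_nonpos_nonneg)
    qed
    then show ?thesis by blast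
  qed
qed



definition V :: "distr \<Rightarrow> nat set \<Rightarrow> (nat \<Rightarrow> real) \<Rightarrow> nat \<Rightarrow> nat \<Rightarrow> real \<Rightarrow> real" where
  "V D B lam i s z = (\<Sum>S\<in>{S. S \<subseteq> B - {i} \<and> card S = s}.
        (\<Prod>k\<in>S. 1 - cdf D (z + lam k)) * (\<Prod>k\<in>B - (S \<union> {i}). cdf D (z + lam k)))"

lemma ri_V: "rank_integrand D B lam i \<theta> z = V D B lam i (\<theta> - 1) z * pdf D (z + lam i)"
  unfolding rank_integrand_def V_def by simp

lemma V_split:
  assumes fin: "finite B" and j: "j \<in> B" "j \<noteq> i"
  shows "V D B lam i s z = cdf D (z + lam j) * V D (B - {j}) lam i s z
     + (if s = 0 then 0 else (1 - cdf D (z + lam j)) * V D (B - {j}) lam i (s - 1) z)"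
proof -
  define F where "F k = cdf D (z + lam k)" for k
  define fam where "fam X s = {S. S \<subseteq> X - {i} \<and> card S = s}" for X s
  define tm where "tm X S = (\<Prod>k\<in>S. 1 - F k) * (\<Prod>k\<in>X - (S \<union> {i}). F k)" for X S
  have Vd: "V D X lam i s z = sum (tm X) (fam X s)" for X s
    unfolding V_def tm_def fam_def F_def by simp
  have finfam: "finite (fam X s)" if "finite X" for X s
    using that unfolding fam_def by (rule rev_finite_subset[OF finite_Pow_iff[THEN iffD2]]) auto
  have fin': "finite (B - {j})" using fin by simp
  have split: "fam B s = fam (B - {j}) s \<union> {S \<in> fam B s. j \<in> S}"
    unfolding fam_def by auto
  have disj: "fam (B - {j}) s \<inter> {S \<in> fam B s. j \<in> S} = {}"
    unfolding fam_def by auto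
  have A1: "sum (tm B) (fam (B - {j}) s) = F j * sum (tm (B - {j})) (fam (B - {j}) s)"
  proof -
    have "tm B S = F j * tm (B - {j}) S" if "S \<in> fam (B - {j}) s" for S
    proof -
      have e: "B - (S \<union> {i}) = insert j ((B - {j}) - (S \<union> {i}))"
        using that j unfolding fam_def by auto
      have "(\<Prod>k\<in>B - (S \<union> {i}). F k) = F j * (\<Prod>k\<in>(B - {j}) - (S \<union> {i}). F k)"
        unfolding e using fin by (subst prod.insert) auto
      then show ?thesis unfolding tm_def by simp
    qed
    then show ?thesis by (simp add: sum_distrib_left)
  qed
  have A2: "sum (tm B) {S \<in> fam B s. j \<in> S} =
     (if s = 0 then 0 else (1 - F j) * sum (tm (B - {j})) (fam (B - {j}) (s - 1)))"
  proof (cases "s = 0")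
    case True
    have "{S \<in> fam B s. j \<in> S} = {}"
    proof -
      have "S = {}" if "S \<in> fam B s" for S
      proof -
        have "S \<subseteq> B" "card S = 0" using that True unfolding fam_def by auto
        then show ?thesis using finite_subset[OF _ fin] by auto
      qed
      then show ?thesis by auto
    qed
    then show ?thesis unfolding \<open>{S \<in> fam B s. j \<in> S} = {}\<close> using True by simp
  next
    case False
    have img: "{S \<in> fam B s. j \<in> S} = insert j ` fam (B - {j}) (s - 1)"
    proof
      show "{S \<in> fam B s. j \<in> S} \<subseteq> insert j ` fam (B - {j}) (s - 1)"
      proof
        fix S assume S: "S \<in> {S \<in> fam B s. j \<in> S}"
        have fS: "finite S" using S unfolding fam_def by (blast intro: finite_subset[OF _ fin])
        have "S - {j} \<in> fam (B - {j}) (s - 1)" using S fS unfolding fam_def by auto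
        moreover have "S = insert j (S - {j})" using S by auto
        ultimately show "S \<in> insert j ` fam (B - {j}) (s - 1)" by blast
      qed
    next
      show "insert j ` fam (B - {j}) (s - 1) \<subseteq> {S \<in> fam B s. j \<in> S}"
      proof
        fix S assume "S \<in> insert j ` fam (B - {j}) (s - 1)"
        then obtain T where T: "T \<in> fam (B - {j}) (s - 1)" "S = insert j T" by auto
        have fT: "finite T" using T unfolding fam_def by (blast intro: finite_subset[OF _ fin])
        have "j \<notin> T" using T unfolding fam_def by auto
        then have "card S = s" using T fT False unfolding fam_def by auto
        then show "S \<in> {S \<in> fam B s. j \<in> S}" using T j unfolding fam_def by auto
      qed
    qed
    have inj: "inj_on (insert j) (fam (B - {j}) (s - 1))"
      unfolding fam_def inj_on_def by blast
    have "tm B (insert j T) = (1 - F j) * tm (B - {j}) T" if "T \<in> fam (B - {j}) (s - 1)" for T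
    proof -
      have fT: "finite T" using that unfolding fam_def by (blast intro: finite_subset[OF _ fin])
      have jT: "j \<notin> T" using that unfolding fam_def by auto
      have e: "B - (insert j T \<union> {i}) = (B - {j}) - (T \<union> {i})" by auto
      show ?thesis unfolding tm_def e using fT jT by (simp add: prod.insert)
    qed
    note ins = this
    have "sum (tm B) (insert j ` fam (B - {j}) (s - 1)) = (1 - F j) * sum (tm (B - {j})) (fam (B - {j}) (s - 1))"
      unfolding sum.reindex[OF inj] sum_distrib_left o_def by (rule sum.cong[OF refl], rule ins)
    then show ?thesis using img False by simp
  qed
  have "V D B lam i s z = sum (tm B) (fam (B - {j}) s) + sum (tm B) {S \<in> fam B s. j \<in> S}"
    unfolding Vd by (subst split, rule sum.union_disjoint) (use finfam[OF fin] finfam[OF fin'] disj in auto)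
  then show ?thesis using A1 A2 by (simp add: Vd F_def)
qed

lemma V_sum:
  assumes fin: "finite B" and j: "j \<in> B" "j \<noteq> i"
  shows "(\<Sum>s<Suc n. V D B lam i s z) = (\<Sum>s<n. V D (B - {j}) lam i s z) + cdf D (z + lam j) * V D (B - {j}) lam i n z"
proof (induction n)
  case 0
  then show ?case using V_split[OF fin j, of D lam 0 z] by simp
next
  case (Suc n)
  have sp: "V D B lam i (Suc n) z = cdf D (z + lam j) * V D (B - {j}) lam i (Suc n) z + (1 - cdf D (z + lam j)) * V D (B - {j}) lam i n z"
    using V_split[OF fin j, of D lam "Suc n" z] by simp
  have "(\<Sum>s<Suc (Suc n). V D B lam i s z) = (\<Sum>s<Suc n. V D B lam i s z) + V D B lam i (Suc n) z" 
    by (rule sum.lessThan_Suc)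
  also have "\<dots> = (\<Sum>s<n. V D (B - {j}) lam i s z) + cdf D (z + lam j) * V D (B - {j}) lam i n z
     + (cdf D (z + lam j) * V D (B - {j}) lam i (Suc n) z + (1 - cdf D (z + lam j)) * V D (B - {j}) lam i n z)"
    by (simp only: Suc.IH sp)
  also have "\<dots> = ((\<Sum>s<n. V D (B - {j}) lam i s z) + V D (B - {j}) lam i n z) + cdf D (z + lam j) * V D (B - {j}) lam i (Suc n) z"
    by (simp add: algebra_simps)
  also have "(\<Sum>s<n. V D (B - {j}) lam i s z) + V D (B - {j}) lam i n z = (\<Sum>s<Suc n. V D (B - {j}) lam i s z)"
    by simp
  finally show ?case .
qed


lemma V_meas[measurable]: "(\<lambda>z. V D B lam i s z) \<in> borel_measurable borel"
  unfolding V_def by measurable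

lemma V_bnd:
  assumes a: "0 < a" "D \<in> {Frechet a, Pareto a}"
  shows "0 \<le> V D B lam i s z" "V D B lam i s z \<le> real (card {S. S \<subseteq> B - {i} \<and> card S = s})"
proof -
  have t: "0 \<le> (\<Prod>k\<in>S. 1 - cdf D (z + lam k)) * (\<Prod>k\<in>B - (S \<union> {i}). cdf D (z + lam k))
      \<and> (\<Prod>k\<in>S. 1 - cdf D (z + lam k)) * (\<Prod>k\<in>B - (S \<union> {i}). cdf D (z + lam k)) \<le> 1" for S
  proof -
    have c: "0 \<le> cdf D x" "cdf D x \<le> 1" for x using cdf_nonneg[OF a] cdf_le1[OF a] by auto
    have "0 \<le> (\<Prod>k\<in>S. 1 - cdf D (z + lam k))" "(\<Prod>k\<in>S. 1 - cdf D (z + lam k)) \<le> 1"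
      using c by (auto intro!: prod_nonneg prod_le_1)
    moreover have "0 \<le> (\<Prod>k\<in>B - (S \<union> {i}). cdf D (z + lam k))" "(\<Prod>k\<in>B - (S \<union> {i}). cdf D (z + lam k)) \<le> 1"
      using c by (auto intro!: prod_nonneg prod_le_1)
    ultimately show ?thesis by (simp add: mult_le_one)
  qed
  show "0 \<le> V D B lam i s z" unfolding V_def using t by (intro sum_nonneg) auto
  show "V D B lam i s z \<le> real (card {S. S \<subseteq> B - {i} \<and> card S = s})"
    unfolding V_def using sum_mono[of "{S. S \<subseteq> B - {i} \<and> card S = s}" _ "\<lambda>_. 1::real"] t by auto
qed

lemma int_pdf0:
  assumes a: "1 < a" "D \<in> {Frechet a, Pareto a}"
  shows "integrable lborel (\<lambda>x. pdf D x)" "integrable lborel (\<lambda>x. pdf D x / x)"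
proof -
  have pn: "0 \<le> pdf D x" for x using a by auto
  have qn: "0 \<le> pdf D x / x" for x using a by (cases "x > 0") auto
  show "integrable lborel (\<lambda>x. pdf D x)"
    by (rule Bochner_Integration.integrable_bound[OF int_Mj[of "27*a"]])
       (use pdf_bounds[OF a] pn in \<open>auto intro!: AE_I2 order_trans[OF _ abs_ge_self]\<close>)
  show "integrable lborel (\<lambda>x. pdf D x / x)"
    by (rule Bochner_Integration.integrable_bound[OF int_Mj[of "27*a"]])
       (use pdf_bounds(2)[OF a] qn in \<open>auto intro!: AE_I2 simp del: abs_divide
          intro: order_trans[OF _ abs_ge_self] simp: abs_of_nonneg[OF qn]\<close>)
qed

lemma int_pdf:
  assumes a: "1 < a" "D \<in> {Frechet a, Pareto a}"
  shows "integrable lborel (\<lambda>z. pdf D (z + c))" "integrable lborel (\<lambda>z. pdf D (z + c) / (z + c))"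
proof -
  have "integrable lborel (\<lambda>z. pdf D (c + 1 * z))"
    by (rule lborel_integrable_real_affine[OF int_pdf0(1)[OF a]]) simp
  then show "integrable lborel (\<lambda>z. pdf D (z + c))" by (simp add: add.commute)
  have "integrable lborel (\<lambda>z. (\<lambda>x. pdf D x / x) (c + 1 * z))"
    by (rule lborel_integrable_real_affine[OF int_pdf0(2)[OF a]]) simp
  then show "integrable lborel (\<lambda>z. pdf D (z + c) / (z + c))" by (simp add: add.commute)
qed

lemma bnd_int:
  assumes a: "1 < a" "D \<in> {Frechet a, Pareto a}"
    and h: "h \<in> borel_measurable borel" and K: "\<And>z. \<bar>h z\<bar> \<le> K"
    and A: "A \<in> sets lborel"
  shows "set_integrable lborel A (\<lambda>z. h z * pdf D (z + c))"
    "set_integrable lborel A (\<lambda>z. h z * pdf D (z + c) / (z + c))"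
proof -
  have pn: "0 \<le> pdf D x" for x using a by auto
  have qn: "0 \<le> pdf D x / x" for x using a by (cases "x > 0") auto
  have "integrable lborel (\<lambda>z. K * pdf D (z + c))" using int_pdf(1)[OF a] by simp
  then have "integrable lborel (\<lambda>z. h z * pdf D (z + c))"
  proof (rule Bochner_Integration.integrable_bound)
    show "(\<lambda>z. h z * pdf D (z + c)) \<in> borel_measurable lborel" using h by measurable
    show "AE x in lborel. norm (h x * pdf D (x + c)) \<le> norm (K * pdf D (x + c))"
      using K pn by (auto simp: abs_mult intro!: AE_I2 mult_right_mono order_trans[OF K abs_ge_self])
  qed
  then show "set_integrable lborel A (\<lambda>z. h z * pdf D (z + c))"
    unfolding set_integrable_def using A by (rule integrable_mult_indicator[rotated])
  have "integrable lborel (\<lambda>z. K * (pdf D (z + c) / (z + c)))" using integrable_mult_right[OF int_pdf(2)[OF a], of K] .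
  then have "integrable lborel (\<lambda>z. h z * pdf D (z + c) / (z + c))"
  proof (rule Bochner_Integration.integrable_bound)
    show "(\<lambda>z. h z * pdf D (z + c) / (z + c)) \<in> borel_measurable lborel" using h by measurable
    have "norm (h x * pdf D (x + c) / (x + c)) \<le> norm (K * (pdf D (x + c) / (x + c)))" for x
    proof -
      have q: "0 \<le> pdf D (x+c)/(x+c)" by (rule qn)
      have "norm (h x * pdf D (x + c) / (x + c)) = \<bar>h x\<bar> * (pdf D (x+c)/(x+c))"
        by (simp only: times_divide_eq_right[symmetric] real_norm_def abs_mult abs_of_nonneg[OF q])
      also have "\<dots> \<le> K * (pdf D (x+c)/(x+c))" using K q by (rule mult_right_mono)
      also have "\<dots> \<le> norm (K * (pdf D (x + c) / (x + c)))" by (simp only: real_norm_def abs_ge_self)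
      finally show ?thesis .
    qed
    then show "AE x in lborel. norm (h x * pdf D (x + c) / (x + c)) \<le> norm (K * (pdf D (x + c) / (x + c)))"
      by simp
  qed
  then show "set_integrable lborel A (\<lambda>z. h z * pdf D (z + c) / (z + c))"
    unfolding set_integrable_def using A by (rule integrable_mult_indicator[rotated])
qed

lemma set_int_sum:
  fixes f :: "nat \<Rightarrow> 'a \<Rightarrow> real"
  assumes "\<And>s. s \<in> I \<Longrightarrow> set_integrable M A (f s)"
  shows "set_integrable M A (\<lambda>x. \<Sum>s\<in>I. f s x)"
    "(LINT x:A|M. (\<Sum>s\<in>I. f s x)) = (\<Sum>s\<in>I. LINT x:A|M. f s x)"
proof -
  have i: "\<And>s. s \<in> I \<Longrightarrow> integrable M (\<lambda>x. indicator A x * f s x)"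
    using assms unfolding set_integrable_def by simp
  show "set_integrable M A (\<lambda>x. \<Sum>s\<in>I. f s x)"
    unfolding set_integrable_def using Bochner_Integration.integrable_sum[OF i]
    by (simp add: sum_distrib_left)
  show "(LINT x:A|M. (\<Sum>s\<in>I. f s x)) = (\<Sum>s\<in>I. LINT x:A|M. f s x)"
    unfolding set_lebesgue_integral_def using Bochner_Integration.integral_sum[OF i]
    by (simp add: sum_distrib_left)
qed


lemma final_arith:
  fixes P A qa ca qb cb :: real
  assumes "0 \<le> P" "0 \<le> A" "0 \<le> qa" "0 \<le> ca" "qa \<le> qb" "ca*qb \<le> cb*qa"
    "P = 0 \<Longrightarrow> A = 0" "qa = 0 \<Longrightarrow> ca = 0" "0 \<le> cb"
  shows "(A+ca)/(P+qa) \<le> max (A/P) ((A+cb)/(P+qb))"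
proof (cases "P + qa = 0")
  case True
  then show ?thesis using assms by auto
next
  case False
  then have pq: "P + qa > 0" using assms by auto
  show ?thesis
  proof (cases "qa = 0")
    case True
    then have "ca = 0" using assms by auto
    then show ?thesis using True by simp
  next
    case False
    then have qa: "qa > 0" using assms by auto
    then have qb: "qb > 0" using assms by auto
    have r: "ca/qa \<le> cb/qb" using assms qa qb by (simp add: divide_simps mult.commute)
    show ?thesis
    proof (cases "P = 0")
      case True
      then have "A = 0" using assms by auto
      then show ?thesis using True r by simp
    next
      case False
      then have P: "P > 0" using assms by auto
      show ?thesis
      proof (cases "(A+ca)/(P+qa) \<le> A/P")
        case True then show ?thesis by simp
      next
        case False
        then have h: "A * (P+qa) < (A+ca) * P" using P pq by (simp add: divide_simps)
        then have "A * qa < ca * P" by (simp add: algebra_simps)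
        then have "A/P < ca/qa" using P qa by (simp add: divide_simps mult.commute)
        define t where "t = cb/qb"
        have tt1: "A/P < t" using r \<open>A/P < ca/qa\<close> unfolding t_def by linarith
        have "ca/qa \<le> t" using r unfolding t_def .
        then have tt2: "ca \<le> qa * t" using qa by (simp add: pos_divide_le_eq mult.commute)
        note tt = tt1 tt2
        have cb: "cb = qb * t" using qb by (simp add: t_def)
        have "(A+ca)/(P+qa) \<le> (A + qa*t)/(P+qa)" using tt pq by (simp add: divide_right_mono)
        also have "\<dots> \<le> (A + qb*t)/(P+qb)"
        proof -
          have "A < P * t" using tt P by (simp add: divide_simps mult.commute)
          then have "(A + qa*t)*(P+qb) \<le> (A + qb*t)*(P+qa)"
          proof -
            have "0 \<le> (qb - qa) * (P*t - A)" using assms(5) \<open>A < P * t\<close> by simp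
            then show ?thesis by (simp add: algebra_simps)
          qed
          then show ?thesis using pq qb P by (simp add: divide_simps)
        qed
        finally show ?thesis using cb by simp
      qed
    qed
  qed
qed

lemma sint_nonneg:
  fixes f :: "'a \<Rightarrow> real"
  shows "(\<And>x. x \<in> A \<Longrightarrow> 0 \<le> f x) \<Longrightarrow> 0 \<le> (LINT x:A|M. f x)"
  unfolding set_lebesgue_integral_def
  by (rule integral_nonneg_AE) (auto split: split_indicator intro!: AE_I2)

lemma sint_nonpos:
  fixes f :: "'a \<Rightarrow> real"
  assumes "\<And>x. x \<in> A \<Longrightarrow> f x \<le> 0"
  shows "(LINT x:A|M. f x) \<le> 0"
proof -
  have "0 \<le> (LINT x:A|M. - f x)" using assms by (intro sint_nonneg) auto
  also have "(LINT x:A|M. - f x) = - (LINT x:A|M. f x)"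
    unfolding set_lebesgue_integral_def by simp
  finally show ?thesis by simp
qed

lemma sint_zero:
  fixes f g :: "'a \<Rightarrow> real"
  assumes i: "set_integrable M A f" and nn: "\<And>x. x \<in> A \<Longrightarrow> 0 \<le> f x" and z: "(LINT x:A|M. f x) = 0"
  shows "(LINT x:A|M. f x * g x) = 0"
proof -
  have i': "integrable M (\<lambda>x. indicator A x * f x)" using i unfolding set_integrable_def by simp
  have nn': "AE x in M. 0 \<le> indicator A x * f x" using nn by (auto split: split_indicator intro!: AE_I2)
  have "integral\<^sup>L M (\<lambda>x. indicator A x * f x) = 0" using z unfolding set_lebesgue_integral_def by simp
  then have "AE x in M. indicator A x * f x = 0" using integral_nonneg_eq_0_iff_AE[OF i' nn'] by simp
  then have "AE x in M. indicator A x * (f x * g x) = 0" by eventually_elim auto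
  then have "integral\<^sup>L M (\<lambda>x. indicator A x * (f x * g x)) = 0" by (rule integral_eq_zero_AE)
  then show ?thesis unfolding set_lebesgue_integral_def by simp
qed

lemma sum_shift1: "(\<Sum>\<theta>=1..(m::nat). f (\<theta> - 1)) = (\<Sum>s<m. (f s::real))"
  by (induction m) auto

lemma phi_rep:
  assumes a: "1 < a" "D \<in> {Frechet a, Pareto a}"
  shows "phi i lam D m B = (LINT z:{lep D - lam i..}|lborel. (\<Sum>s<m. V D B lam i s z) * pdf D (z + lam i))"
    "J i lam D m B = (LINT z:{lep D - lam i..}|lborel. (\<Sum>s<m. V D B lam i s z) * pdf D (z + lam i) / (z + lam i))"
proof -
  let ?U = "{lep D - lam i..}"
  have a0: "0 < a" using a by simp
  have bV: "\<bar>V D B lam i s z\<bar> \<le> real (card {S. S \<subseteq> B - {i} \<and> card S = s})" for s z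
    using V_bnd[OF a0 a(2), of B lam i s z] by auto
  have int1: "set_integrable lborel ?U (\<lambda>z. V D B lam i s z * pdf D (z + lam i))" for s
    by (rule bnd_int(1)[OF a _ bV]) auto
  have int2: "set_integrable lborel ?U (\<lambda>z. V D B lam i s z * pdf D (z + lam i) / (z + lam i))" for s
    by (rule bnd_int(2)[OF a _ bV]) auto
  have "phi i lam D m B = (\<Sum>\<theta>=1..m. LINT z:?U|lborel. V D B lam i (\<theta>-1) z * pdf D (z + lam i))"
    unfolding phi_def phi_theta_def ri_V ..
  also have "\<dots> = (\<Sum>s<m. LINT z:?U|lborel. V D B lam i s z * pdf D (z + lam i))"
    by (rule sum_shift1[of "\<lambda>s. LINT z:?U|lborel. V D B lam i s z * pdf D (z + lam i)"])
  also have "\<dots> = (LINT z:?U|lborel. (\<Sum>s<m. V D B lam i s z * pdf D (z + lam i)))"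
    by (rule set_int_sum(2)[OF int1, symmetric])
  also have "\<dots> = (LINT z:?U|lborel. (\<Sum>s<m. V D B lam i s z) * pdf D (z + lam i))"
    by (simp add: sum_distrib_right)
  finally show "phi i lam D m B = (LINT z:?U|lborel. (\<Sum>s<m. V D B lam i s z) * pdf D (z + lam i))" .
  have "J i lam D m B = (\<Sum>\<theta>=1..m. LINT z:?U|lborel. V D B lam i (\<theta>-1) z * pdf D (z + lam i) / (z + lam i))"
    unfolding J_def J_theta_def ri_V ..
  also have "\<dots> = (\<Sum>s<m. LINT z:?U|lborel. V D B lam i s z * pdf D (z + lam i) / (z + lam i))"
    by (rule sum_shift1[of "\<lambda>s. LINT z:?U|lborel. V D B lam i s z * pdf D (z + lam i) / (z + lam i)"])
  also have "\<dots> = (LINT z:?U|lborel. (\<Sum>s<m. V D B lam i s z * pdf D (z + lam i) / (z + lam i)))"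
    by (rule set_int_sum(2)[OF int2, symmetric])
  also have "\<dots> = (LINT z:?U|lborel. (\<Sum>s<m. V D B lam i s z) * pdf D (z + lam i) / (z + lam i))"
    by (simp add: sum_distrib_right sum_divide_distrib)
  finally show "J i lam D m B = (LINT z:?U|lborel. (\<Sum>s<m. V D B lam i s z) * pdf D (z + lam i) / (z + lam i))" .
qed

theorem lemma12:
  fixes \<alpha> :: real and D :: distr and d :: nat and B :: "nat set" and i j m :: nat
    and lam lam' :: "nat \<Rightarrow> real"
  assumes "\<alpha> > 1"
    and "D \<in> {Frechet \<alpha>, Pareto \<alpha>}"
    and "B \<subseteq> {1..d}" and "i \<in> B"
    and "\<forall>k\<in>{1..d}. lam k \<ge> 0"
    and "m > 1"
    and "j \<in> B - {i}"
    and "\<forall>k\<in>{1..d}. lam' k \<ge> 0"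
    and "lam' j \<ge> lam j"
    and "\<forall>k\<in>{1..d}. k \<noteq> j \<longrightarrow> lam' k = lam k"
  shows "J i lam D m B / phi i lam D m B
         \<le> max (J i lam' D (m - 1) (B - {j}) / phi i lam' D (m - 1) (B - {j}))
               (J i lam' D m B / phi i lam' D m B)"
proof -
  have a1: "1 < \<alpha>" using assms(1) .
  have a0: "0 < \<alpha>" using assms(1) by simp
  have Dm: "D \<in> {Frechet \<alpha>, Pareto \<alpha>}" using assms(2) .
  have finB: "finite B" using assms(3) finite_subset by blast
  have jB: "j \<in> B" "j \<noteq> i" using assms(7) by auto
  obtain n where mn: "m = Suc n" using assms(6) by (cases m) auto
  have mn1: "m - 1 = n" using mn by simp
  define U where "U = {lep D - lam i..}"
  have Us: "U \<in> sets lborel" by (simp add: U_def)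
  have lk: "lam' k = lam k" if "k \<in> B - {j}" for k
    using that assms(3,10) by auto
  have lami: "lam' i = lam i" using lk assms(4) jB by auto
  have Weq: "V D (B - {j}) lam' i s z = V D (B - {j}) lam i s z" for s z
    unfolding V_def
  proof (rule sum.cong[OF refl])
    fix S assume S: "S \<in> {S. S \<subseteq> B - {j} - {i} \<and> card S = s}"
    have "(\<Prod>k\<in>S. 1 - cdf D (z + lam' k)) = (\<Prod>k\<in>S. 1 - cdf D (z + lam k))"
    proof (rule prod.cong[OF refl])
      fix k assume "k \<in> S"
      then have "k \<in> B - {j}" using S by auto
      then show "1 - cdf D (z + lam' k) = 1 - cdf D (z + lam k)" using lk by simp
    qed
    moreover have "(\<Prod>k\<in>B - {j} - (S \<union> {i}). cdf D (z + lam' k)) = (\<Prod>k\<in>B - {j} - (S \<union> {i}). cdf D (z + lam k))"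
      using lk by (intro prod.cong) auto
    ultimately show "(\<Prod>k\<in>S. 1 - cdf D (z + lam' k)) * (\<Prod>k\<in>B - {j} - (S \<union> {i}). cdf D (z + lam' k)) =
         (\<Prod>k\<in>S. 1 - cdf D (z + lam k)) * (\<Prod>k\<in>B - {j} - (S \<union> {i}). cdf D (z + lam k))" by simp
  qed
  define W where "W s z = V D (B - {j}) lam i s z" for s z
  define R where "R z = (\<Sum>s<n. W s z)" for z
  define Q where "Q z = W n z" for z
  define p where "p z = pdf D (z + lam i)" for z
  define g where "g z = 1 / (z + lam i)" for z
  define Fa where "Fa z = cdf D (z + lam j)" for z
  define Fb where "Fb z = cdf D (z + lam' j)" for z
  have s1: "(\<Sum>s<m. V D B lam i s z) = R z + Fa z * Q z" for z
    using V_sum[OF finB jB, where n=n and D=D and lam=lam and z=z] mn by (simp add: R_def Q_def W_def Fa_def)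
  have s2: "(\<Sum>s<m. V D B lam' i s z) = R z + Fb z * Q z" for z
    using V_sum[OF finB jB, where n=n and D=D and lam=lam' and z=z] mn Weq by (simp add: R_def Q_def W_def Fb_def)
  have s3: "(\<Sum>s<m - 1. V D (B - {j}) lam' i s z) = R z" for z
    using mn1 Weq by (simp add: R_def W_def)
  define KR where "KR = (\<Sum>s<n. real (card {S. S \<subseteq> B - {j} - {i} \<and> card S = s}))"
  define KQ where "KQ = real (card {S. S \<subseteq> B - {j} - {i} \<and> card S = n})"
  have Rb: "0 \<le> R z" "R z \<le> KR" for z
    unfolding R_def KR_def W_def using V_bnd[OF a0 Dm]
    by (auto intro!: sum_nonneg sum_mono)
  have Qb: "0 \<le> Q z" "Q z \<le> KQ" for z
    unfolding Q_def KQ_def W_def using V_bnd[OF a0 Dm] by auto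
  have Fab: "0 \<le> Fa z" "Fa z \<le> 1" "0 \<le> Fb z" "Fb z \<le> 1" "Fa z \<le> Fb z" for z
    unfolding Fa_def Fb_def using cdf_nonneg[OF a0 Dm] cdf_le1[OF a0 Dm] cdf_mono[OF a0 Dm] assms(9)
    by auto
  have pn: "0 \<le> p z" for z unfolding p_def using Dm a0 by auto
  have p0: "p z = 0" if "z + lam i \<le> 0" for z
    unfolding p_def using Dm that by auto
  have gU: "0 \<le> g z" if "z \<in> U" for z
  proof -
    have "lep D \<ge> 0" using Dm by auto
    then show ?thesis using that unfolding U_def g_def by auto
  qed
  have mR[measurable]: "R \<in> borel_measurable borel" unfolding R_def[abs_def] W_def by measurable
  have mQ[measurable]: "Q \<in> borel_measurable borel" unfolding Q_def[abs_def] W_def by measurable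
  have mFa[measurable]: "Fa \<in> borel_measurable borel" unfolding Fa_def[abs_def] by measurable
  have mFb[measurable]: "Fb \<in> borel_measurable borel" unfolding Fb_def[abs_def] by measurable
  have bR: "\<bar>R z\<bar> \<le> KR" for z using Rb[of z] by auto
  have bA: "\<bar>Fa z * Q z\<bar> \<le> KQ" for z
  proof -
    have "Fa z * Q z \<le> 1 * Q z" using Fab[of z] Qb[of z] by (intro mult_right_mono) auto
    then show ?thesis using Fab[of z] Qb[of z] by auto
  qed
  have bB: "\<bar>Fb z * Q z\<bar> \<le> KQ" for z
  proof -
    have "Fb z * Q z \<le> 1 * Q z" using Fab[of z] Qb[of z] by (intro mult_right_mono) auto
    then show ?thesis using Fab[of z] Qb[of z] by auto
  qed
  have iR1: "set_integrable lborel U (\<lambda>z. R z * p z)"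
    using bnd_int(1)[OF a1 Dm mR bR Us] unfolding p_def .
  have iR2: "set_integrable lborel U (\<lambda>z. R z * p z * g z)"
    using bnd_int(2)[OF a1 Dm mR bR Us] unfolding p_def g_def by simp
  have iA1: "set_integrable lborel U (\<lambda>z. Fa z * Q z * p z)"
    using bnd_int(1)[OF a1 Dm _ bA Us] unfolding p_def by simp
  have iA2: "set_integrable lborel U (\<lambda>z. Fa z * Q z * p z * g z)"
    using bnd_int(2)[OF a1 Dm _ bA Us] unfolding p_def g_def by simp
  have iB1: "set_integrable lborel U (\<lambda>z. Fb z * Q z * p z)"
    using bnd_int(1)[OF a1 Dm _ bB Us] unfolding p_def by simp
  have iB2: "set_integrable lborel U (\<lambda>z. Fb z * Q z * p z * g z)"
    using bnd_int(2)[OF a1 Dm _ bB Us] unfolding p_def g_def by simp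
  define P where "P = (LINT z:U|lborel. R z * p z)"
  define A where "A = (LINT z:U|lborel. R z * p z * g z)"
  define qa where "qa = (LINT z:U|lborel. Fa z * Q z * p z)"
  define ca where "ca = (LINT z:U|lborel. Fa z * Q z * p z * g z)"
  define qb where "qb = (LINT z:U|lborel. Fb z * Q z * p z)"
  define cb where "cb = (LINT z:U|lborel. Fb z * Q z * p z * g z)"
  have e1: "phi i lam D m B = P + qa"
  proof -
    have "phi i lam D m B = (LINT z:U|lborel. R z * p z + Fa z * Q z * p z)"
      unfolding phi_rep(1)[OF a1 Dm] s1 U_def[symmetric] p_def by (simp add: algebra_simps)
    also have "\<dots> = P + qa" unfolding P_def qa_def by (rule set_integral_add(2)[OF iR1 iA1])
    finally show ?thesis .
  qed
  have e2: "J i lam D m B = A + ca"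
  proof -
    have "J i lam D m B = (LINT z:U|lborel. R z * p z * g z + Fa z * Q z * p z * g z)"
      unfolding phi_rep(2)[OF a1 Dm] s1 U_def[symmetric] p_def g_def by (simp add: algebra_simps add_divide_distrib)
    also have "\<dots> = A + ca" unfolding A_def ca_def by (rule set_integral_add(2)[OF iR2 iA2])
    finally show ?thesis .
  qed
  have e3: "phi i lam' D m B = P + qb"
  proof -
    have "phi i lam' D m B = (LINT z:U|lborel. R z * p z + Fb z * Q z * p z)"
      unfolding phi_rep(1)[OF a1 Dm] s2 lami U_def[symmetric] p_def by (simp add: algebra_simps)
    also have "\<dots> = P + qb" unfolding P_def qb_def by (rule set_integral_add(2)[OF iR1 iB1])
    finally show ?thesis .
  qed
  have e4: "J i lam' D m B = A + cb"
  proof -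
    have "J i lam' D m B = (LINT z:U|lborel. R z * p z * g z + Fb z * Q z * p z * g z)"
      unfolding phi_rep(2)[OF a1 Dm] s2 lami U_def[symmetric] p_def g_def by (simp add: algebra_simps add_divide_distrib)
    also have "\<dots> = A + cb" unfolding A_def cb_def by (rule set_integral_add(2)[OF iR2 iB2])
    finally show ?thesis .
  qed
  have e5: "phi i lam' D (m - 1) (B - {j}) = P"
    unfolding phi_rep(1)[OF a1 Dm] s3 lami U_def[symmetric] P_def p_def ..
  have e6: "J i lam' D (m - 1) (B - {j}) = A"
    unfolding phi_rep(2)[OF a1 Dm] s3 lami U_def[symmetric] A_def p_def g_def by simp
  have nP: "0 \<le> P" unfolding P_def using Rb pn by (intro sint_nonneg) auto
  have nA: "0 \<le> A" unfolding A_def using Rb pn gU by (intro sint_nonneg) auto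
  have nqa: "0 \<le> qa" unfolding qa_def using Qb Fab pn by (intro sint_nonneg) auto
  have nca: "0 \<le> ca" unfolding ca_def using Qb Fab pn gU by (intro sint_nonneg) auto
  have nqb: "0 \<le> qb" unfolding qb_def using Qb Fab pn by (intro sint_nonneg) auto
  have ncb: "0 \<le> cb" unfolding cb_def using Qb Fab pn gU by (intro sint_nonneg) auto
  have qab: "qa \<le> qb" unfolding qa_def qb_def
    using Qb Fab pn by (intro set_integral_mono[OF iA1 iB1]) (auto intro!: mult_right_mono)
  have PA: "A = 0" if "P = 0"
    unfolding A_def using sint_zero[OF iR1 _ that[unfolded P_def], of g] Rb pn by auto
  have qca: "ca = 0" if "qa = 0"
    unfolding ca_def using sint_zero[OF iA1 _ that[unfolded qa_def], of g] Qb Fab pn by auto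
  have key: "ca * qb \<le> cb * qa"
  proof (cases "qb = 0")
    case True
    then show ?thesis using ncb nqa by simp
  next
    case False
    then have qbp: "qb > 0" using nqb by simp
    define t where "t = cb / qb"
    have t0: "0 \<le> t" unfolding t_def using ncb nqb by simp
    have cbt: "cb = t * qb" unfolding t_def using qbp by simp
    obtain \<rho> where hr: "\<forall>z. z + lam i > 0 \<longrightarrow> (1/(z + lam i) - t) * (cdf D (z + lam j) - \<rho> * cdf D (z + lam' j)) \<le> 0"
      using sign_lemma[of "cdf D" "lam j" "lam' j" t "lam i"] cdf_mono[OF a0 Dm] cdf_nonneg[OF a0 Dm]
        cdf_tp2[OF a0 Dm] assms(9) t0 by blast
    have pw: "Fa z * Q z * p z * g z - t * (Fa z * Q z * p z) - \<rho> * (Fb z * Q z * p z * g z) + (\<rho> * t) * (Fb z * Q z * p z) \<le> 0" for z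
    proof -
      have eq: "Fa z * Q z * p z * g z - t * (Fa z * Q z * p z) - \<rho> * (Fb z * Q z * p z * g z) + (\<rho> * t) * (Fb z * Q z * p z)
          = (Q z * p z) * ((g z - t) * (Fa z - \<rho> * Fb z))" by (simp add: algebra_simps)
      show ?thesis
      proof (cases "z + lam i > 0")
        case True
        have "(g z - t) * (Fa z - \<rho> * Fb z) \<le> 0" using hr True unfolding g_def Fa_def Fb_def by blast
        then show ?thesis unfolding eq by (rule mult_nonneg_nonpos[OF mult_nonneg_nonneg[OF Qb(1) pn]])
      next
        case False
        then show ?thesis unfolding eq using p0[of z] by simp
      qed
    qed
    have i1: "set_integrable lborel U (\<lambda>z. Fa z * Q z * p z * g z - t * (Fa z * Q z * p z))"
      using iA2 iA1 by auto
    have i2: "set_integrable lborel U (\<lambda>z. Fa z * Q z * p z * g z - t * (Fa z * Q z * p z) - \<rho> * (Fb z * Q z * p z * g z))"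
      using i1 iB2 by auto
    have i3: "set_integrable lborel U (\<lambda>z. (\<rho> * t) * (Fb z * Q z * p z))"
      using iB1 by auto
    have "(LINT z:U|lborel. Fa z * Q z * p z * g z - t * (Fa z * Q z * p z) - \<rho> * (Fb z * Q z * p z * g z) + (\<rho> * t) * (Fb z * Q z * p z))
        = ca - t * qa - \<rho> * cb + (\<rho> * t) * qb"
    proof -
      have "(LINT z:U|lborel. Fa z * Q z * p z * g z - t * (Fa z * Q z * p z) - \<rho> * (Fb z * Q z * p z * g z) + (\<rho> * t) * (Fb z * Q z * p z))
          = (LINT z:U|lborel. Fa z * Q z * p z * g z - t * (Fa z * Q z * p z) - \<rho> * (Fb z * Q z * p z * g z)) + (LINT z:U|lborel. (\<rho> * t) * (Fb z * Q z * p z))"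
        by (rule set_integral_add(2)[OF i2 i3])
      also have "(LINT z:U|lborel. Fa z * Q z * p z * g z - t * (Fa z * Q z * p z) - \<rho> * (Fb z * Q z * p z * g z))
          = (LINT z:U|lborel. Fa z * Q z * p z * g z - t * (Fa z * Q z * p z)) - (LINT z:U|lborel. \<rho> * (Fb z * Q z * p z * g z))"
        by (rule set_integral_diff(2)[OF i1]) (use iB2 in auto)
      also have "(LINT z:U|lborel. Fa z * Q z * p z * g z - t * (Fa z * Q z * p z))
          = (LINT z:U|lborel. Fa z * Q z * p z * g z) - (LINT z:U|lborel. t * (Fa z * Q z * p z))"
        by (rule set_integral_diff(2)[OF iA2]) (use iA1 in auto)
      finally show ?thesis unfolding ca_def qa_def cb_def qb_def by simp
    qed
    moreover have "(LINT z:U|lborel. Fa z * Q z * p z * g z - t * (Fa z * Q z * p z) - \<rho> * (Fb z * Q z * p z * g z) + (\<rho> * t) * (Fb z * Q z * p z)) \<le> 0"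
      by (rule sint_nonpos) (rule pw)
    ultimately have "ca - t * qa - \<rho> * cb + (\<rho> * t) * qb \<le> 0" by simp
    then have "ca \<le> t * qa" using cbt by (simp add: algebra_simps)
    then have "ca * qb \<le> t * qa * qb" using qbp by (simp add: mult_right_mono)
    then show ?thesis using cbt by (simp add: algebra_simps)
  qed
  have "(A + ca) / (P + qa) \<le> max (A / P) ((A + cb) / (P + qb))"
    by (rule final_arith[OF nP nA nqa nca qab key PA qca ncb])
  then show ?thesis unfolding e1 e2 e3 e4 e5 e6 .
qed

end
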